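(* For all $\varepsilon>0$ there exist $c,n_0\in\mathbb{N}$ such that for all primes $p\ge n_0$ the following holds. If $\delta\ge c/\log p$ (with $p^\delta$ an integer), $\mu>0$ and $r=\mu n$ is a positive integer, then every proper $(r,p^{\delta})$-GAP $X\subseteq\mathbb{Z}_p^n$ is a $(\mu n/p^{0.9\delta},\,0.1,\,\varepsilon)$-additive source of entropy rate $\delta\mu$ in $(\mathbb{Z}_p^n,+)$.
   Context: An $(r,s)$-GAP in $\mathbb{Z}_p^n$ is a set $\{b_0+\sum_{i=1}^r a_ib_i: a_i\in\mathbb{Z},\ 0\le a_i\le s-1\}$ with $b_0,\dots,b_r\in\mathbb{Z}_p^n$; proper means all $s^r$ sums are distinct. For $X\subseteq\mathbb{Z}_p^n$, $\mathrm{Sym}_{1-\alpha}(X)=\{g:|X\cap(X+g)|\ge(1-\alpha)|X|\}$, and $X$ is $(\alpha,\beta,\tau)$-additive if $|X+X|\le|X|^{1+\tau}$ and $|\mathrm{Sym}_{1-\alpha}(X)|\ge|X|^{\beta}$. Entropy rate $\delta'$ means $|X|\ge p^{\delta' n}$. *)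

theory Defs
  imports "HOL-Analysis.Analysis" "HOL-Computational_Algebra.Primes"
begin

text \<open>Elements of Z_p^n are represented as functions nat => int whose coordinates
  i < n lie in {0..<p} and which vanish for i >= n.\<close>

definition zpn :: "nat \<Rightarrow> nat \<Rightarrow> (nat \<Rightarrow> int) set" where
  "zpn p n = {v. (\<forall>i<n. 0 \<le> v i \<and> v i < int p) \<and> (\<forall>i\<ge>n. v i = 0)}"

definition vadd :: "nat \<Rightarrow> (nat \<Rightarrow> int) \<Rightarrow> (nat \<Rightarrow> int) \<Rightarrow> (nat \<Rightarrow> int)" where
  "vadd p u v = (\<lambda>i. (u i + v i) mod int p)"

definition sumset :: "nat \<Rightarrow> (nat \<Rightarrow> int) set \<Rightarrow> (nat \<Rightarrow> int) set \<Rightarrow> (nat \<Rightarrow> int) set" where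
  "sumset p A B = {vadd p a b | a b. a \<in> A \<and> b \<in> B}"

definition gap_elem :: "nat \<Rightarrow> nat \<Rightarrow> (nat \<Rightarrow> int) \<Rightarrow> (nat \<Rightarrow> nat \<Rightarrow> int) \<Rightarrow> (nat \<Rightarrow> int) \<Rightarrow> (nat \<Rightarrow> int)" where
  "gap_elem p r b0 b a = (\<lambda>i. (b0 i + (\<Sum>j\<in>{1..r}. a j * b j i)) mod int p)"

definition gap_coeffs :: "nat \<Rightarrow> nat \<Rightarrow> (nat \<Rightarrow> int) set" where
  "gap_coeffs r s = PiE {1..r} (\<lambda>_. {0..<int s})"

definition gap :: "nat \<Rightarrow> nat \<Rightarrow> nat \<Rightarrow> (nat \<Rightarrow> int) \<Rightarrow> (nat \<Rightarrow> nat \<Rightarrow> int) \<Rightarrow> (nat \<Rightarrow> int) set" where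
  "gap p r s b0 b = gap_elem p r b0 b ` gap_coeffs r s"

definition is_proper_gap :: "nat \<Rightarrow> nat \<Rightarrow> nat \<Rightarrow> nat \<Rightarrow> (nat \<Rightarrow> int) set \<Rightarrow> bool" where
  "is_proper_gap p n r s X \<longleftrightarrow>
     (\<exists>b0 b. b0 \<in> zpn p n \<and> (\<forall>j\<in>{1..r}. b j \<in> zpn p n) \<and>
            X = gap p r s b0 b \<and> inj_on (gap_elem p r b0 b) (gap_coeffs r s))"

definition Sym :: "nat \<Rightarrow> nat \<Rightarrow> real \<Rightarrow> (nat \<Rightarrow> int) set \<Rightarrow> (nat \<Rightarrow> int) set" where
  "Sym p n \<alpha> X = {g \<in> zpn p n. real (card (X \<inter> (\<lambda>x. vadd p x g) ` X)) \<ge> (1 - \<alpha>) * real (card X)}"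

definition additive :: "nat \<Rightarrow> nat \<Rightarrow> real \<Rightarrow> real \<Rightarrow> real \<Rightarrow> (nat \<Rightarrow> int) set \<Rightarrow> bool" where
  "additive p n \<alpha> \<beta> \<tau> X \<longleftrightarrow>
     real (card (sumset p X X)) \<le> real (card X) powr (1 + \<tau>) \<and>
     real (card (Sym p n \<alpha> X)) \<ge> real (card X) powr \<beta>"

definition entropy_rate :: "nat \<Rightarrow> nat \<Rightarrow> real \<Rightarrow> (nat \<Rightarrow> int) set \<Rightarrow> bool" where
  "entropy_rate p n \<delta>' X \<longleftrightarrow> real (card X) \<ge> real p powr (\<delta>' * real n)"

end

theory Submission
  imports Defs
begin


lemma card_coeffs: "card (gap_coeffs r s) = s ^ r"
  by (simp add: gap_coeffs_def card_PiE)

lemma finite_coeffs: "finite (gap_coeffs r s)"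
  by (simp add: gap_coeffs_def finite_PiE)

lemma shift: "vadd p (gap_elem p r b0 b a) (gap_elem p r b1 b a') =
   gap_elem p r (\<lambda>i. b0 i + b1 i) b (\<lambda>j. a j + a' j)"
  unfolding vadd_def gap_elem_def
  by (rule ext) (simp add: mod_add_eq sum.distrib algebra_simps)

lemma gap_cong: assumes "\<And>j. j \<in> {1..r} \<Longrightarrow> a j = a' j" shows "gap_elem p r b0 b a = gap_elem p r b0 b a'"
proof -
  have "\<And>i. (\<Sum>j\<in>{1..r}. a j * b j i) = (\<Sum>j\<in>{1..r}. a' j * b j i)"
    using assms by (intro sum.cong) auto
  then show ?thesis by (simp add: gap_elem_def)
qed

lemma gap0: "vadd p b0 (gap_elem p r (\<lambda>_. 0) b a) = gap_elem p r b0 b a"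
  unfolding vadd_def gap_elem_def by (rule ext) (simp add: mod_add_right_eq)

lemma gap0_zpn: assumes "p > 0" "\<forall>j\<in>{1..r}. b j \<in> zpn p n" shows "gap_elem p r (\<lambda>_. 0) b a \<in> zpn p n"
proof -
  have "\<forall>i\<ge>n. \<forall>j\<in>{1..r}. b j i = 0" using assms(2) unfolding zpn_def by blast
  then have "\<forall>i\<ge>n. (\<Sum>j\<in>{1..r}. a j * b j i) = 0" by simp
  then show ?thesis using assms(1) unfolding zpn_def gap_elem_def by simp
qed



lemma zpn_finite: "finite (zpn p n)"
proof -
  have "inj_on (\<lambda>v. restrict v {..<n}) (zpn p n)"
  proof (rule inj_onI)
    fix u v assume u: "u \<in> zpn p n" and v: "v \<in> zpn p n" and e: "restrict u {..<n} = restrict v {..<n}"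
    show "u = v"
    proof
      fix i show "u i = v i"
      proof (cases "i < n")
        case True then show ?thesis using e by (metis lessThan_iff restrict_apply')
      next
        case False then show ?thesis using u v unfolding zpn_def by auto
      qed
    qed
  qed
  moreover have "(\<lambda>v. restrict v {..<n}) ` zpn p n \<subseteq> PiE {..<n} (\<lambda>_. {0..<int p})"
  proof (rule image_subsetI)
    fix v assume v: "v \<in> zpn p n"
    show "restrict v {..<n} \<in> PiE {..<n} (\<lambda>_. {0..<int p})"
    proof (rule PiE_I)
      fix i assume i: "i \<in> {..<n}"
      then have "restrict v {..<n} i = v i" by simp
      moreover have "0 \<le> v i \<and> v i < int p" using v i unfolding zpn_def by blast
      ultimately show "restrict v {..<n} i \<in> {0..<int p}" by simp
    next
      fix i assume ni: "i \<notin> {..<n}"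
      show "restrict v {..<n} i = undefined" unfolding restrict_def using ni by (simp only: if_False)
    qed
  qed
  moreover have "finite (PiE {..<n} (\<lambda>_. {0..<int p}))" by (simp add: finite_PiE)
  ultimately show ?thesis by (meson finite_imageD finite_subset)
qed

lemma key:
  fixes p n r s c :: nat and \<delta> \<mu> \<epsilon> :: real
  assumes pr: "prime p" and c\<epsilon>: "1 \<le> real c * \<epsilon>" and \<epsilon>pos: "\<epsilon> > 0"
   and \<delta>c: "\<delta> \<ge> real c / ln (real p)" and sdef: "real s = real p powr \<delta>"
   and \<mu>: "\<mu> > 0" and rdef: "real r = \<mu> * real n" and rpos: "r > 0"
   and gp: "is_proper_gap p n r s X"
  shows "additive p n (\<mu> * real n / real p powr (0.9 * \<delta>)) 0.1 \<epsilon> X \<and> entropy_rate p n (\<delta> * \<mu>) X"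
proof -
  obtain b0 b where b0: "b0 \<in> zpn p n" and bz: "\<forall>j\<in>{1..r}. b j \<in> zpn p n"
    and Xd: "X = gap p r s b0 b" and inj: "inj_on (gap_elem p r b0 b) (gap_coeffs r s)"
    using gp unfolding is_proper_gap_def by blast
  have p1: "real p > 1" using pr prime_gt_1_nat by simp
  have pp: "p > 0" using p1 by simp
  have lnp: "ln (real p) > 0" using p1 by simp
  have \<delta>ln: "real c \<le> \<delta> * ln (real p)" using \<delta>c lnp by (simp add: divide_le_eq)
  have cpos: "c \<ge> 1" using c\<epsilon> by (cases c) auto
  have sexp: "real s = exp (\<delta> * ln (real p))" using sdef p1 by (simp add: powr_def)
  have "exp (\<delta> * ln (real p)) \<ge> exp 1" using \<delta>ln cpos by simp
  moreover have "exp (1::real) \<ge> 2" using exp_ge_add_one_self[of "1::real"] by simp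
  ultimately have s2: "real s \<ge> 2" using sexp by linarith
  then have s1: "s > 1" by simp
  have spos: "real s > 0" using s2 by simp
  have cardX: "card X = s ^ r"
    using inj Xd by (simp add: gap_def card_image card_coeffs)
  have finX: "finite X" using Xd by (simp add: gap_def finite_coeffs)
  have ent: "entropy_rate p n (\<delta> * \<mu>) X"
  proof -
    have "real p powr (\<delta> * \<mu> * real n) = real p powr (real r * \<delta>)" using rdef by (simp add: ac_simps)
    also have "\<dots> = real s ^ r" using sdef p1 by (simp add: powr_power)
    finally show ?thesis unfolding entropy_rate_def cardX by simp
  qed
  have sub: "sumset p X X \<subseteq> gap_elem p r (\<lambda>i. b0 i + b0 i) b ` gap_coeffs r (2 * s - 1)"
  proof
    fix z assume "z \<in> sumset p X X"
    then obtain a a' where a: "a \<in> gap_coeffs r s" "a' \<in> gap_coeffs r s"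
      and z: "z = vadd p (gap_elem p r b0 b a) (gap_elem p r b0 b a')"
      unfolding sumset_def Xd gap_def by blast
    define a2 where "a2 = restrict (\<lambda>j. a j + a' j) {1..r}"
    have i2: "int (2 * s - 1) = 2 * int s - 1" using s1 by simp
    have ab: "a j \<in> {0..<int s}" "a' j \<in> {0..<int s}" if "j \<in> {1..r}" for j
      using a that unfolding gap_coeffs_def by (blast intro: PiE_mem)+
    have "a2 \<in> gap_coeffs r (2 * s-1)" unfolding gap_coeffs_def i2
    proof (rule PiE_I)
      fix j assume j: "j \<in> {1..r}"
      then show "a2 j \<in> {0..<2 * int s - 1}" using ab[OF j] unfolding a2_def by simp
    next
      fix j assume nj: "j \<notin> {1..r}" show "a2 j = undefined" unfolding a2_def restrict_def using nj by (simp only: if_False)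
    qed
    moreover have "z = gap_elem p r (\<lambda>i. b0 i + b0 i) b a2"
      unfolding z shift a2_def by (rule gap_cong) simp
    ultimately show "z \<in> gap_elem p r (\<lambda>i. b0 i + b0 i) b ` gap_coeffs r (2 * s - 1)" by blast
  qed
  have "card (sumset p X X) \<le> (2 * s-1)^r"
    using card_mono[OF finite_imageI[OF finite_coeffs] sub] card_image_le[OF finite_coeffs]
    by (metis card_coeffs le_trans)
  also have "\<dots> \<le> (2 * s)^r" by (rule power_mono) simp_all
  finally have cs0: "real (card (sumset p X X)) \<le> real ((2 * s)^r)"
    by (simp only: of_nat_le_iff)
  have cs: "real (card (sumset p X X)) \<le> 2^r * real s ^ r"
    using cs0 by (simp add: power_mult_distrib)
  have se: "real s powr \<epsilon> \<ge> 2"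
  proof -
    have "real s powr \<epsilon> = exp (\<epsilon> * (\<delta> * ln (real p)))" using sexp spos by (simp add: powr_def)
    moreover have "\<epsilon> * (\<delta> * ln (real p)) \<ge> 1"
    proof -
      have h: "real c * \<epsilon> \<le> (\<delta> * ln (real p)) * \<epsilon>" using mult_right_mono[OF \<delta>ln] \<epsilon>pos by simp
      then have "1 \<le> (\<delta> * ln (real p)) * \<epsilon>" using c\<epsilon> by linarith
      then show ?thesis by (simp add: mult.commute)
    qed
    ultimately show ?thesis using exp_ge_add_one_self[of "\<epsilon> * (\<delta> * ln (real p))"] by linarith
  qed
  have sumb: "real (card (sumset p X X)) \<le> real (card X) powr (1 + \<epsilon>)"
  proof -
    have "(2::real)^r \<le> (real s powr \<epsilon>)^r" using se by (simp add: power_mono)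
    also have "\<dots> = real s powr (real r * \<epsilon>)" using spos by (simp add: powr_power)
    finally have "2^r * real s ^ r \<le> real s powr (real r * \<epsilon>) * real s powr real r"
      using spos by (simp add: powr_realpow)
    also have "\<dots> = real (card X) powr (1 + \<epsilon>)"
      unfolding cardX using spos
      by (simp add: powr_realpow[symmetric] powr_powr powr_add[symmetric] algebra_simps)
    finally show ?thesis using cs by linarith
  qed
  define t where "t = nat \<lfloor>real s powr 0.1\<rfloor>"
  have sp01: "real s powr 0.1 \<ge> 0" by simp
  have tr: "real t = real_of_int \<lfloor>real s powr 0.1\<rfloor>" using sp01 by (simp add: t_def)
  have tle: "real t \<le> real s powr 0.1" using tr by simp
  have tgt: "real s powr 0.1 < real t + 1" using tr floor_correct[of "real s powr 0.1"] by simp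
  have "real s powr 0.1 < real s powr 1" using s2 by (intro powr_less_mono) auto
  then have tlts: "t < s" using tle spos by simp
  define G where "G = gap_elem p r (\<lambda>_. 0) b ` gap_coeffs r (t+1)"
  have csub: "gap_coeffs r (t+1) \<subseteq> gap_coeffs r s"
    unfolding gap_coeffs_def using tlts by (intro PiE_mono) auto
  have inj0: "inj_on (gap_elem p r (\<lambda>_. 0) b) (gap_coeffs r (t+1))"
  proof (rule inj_onI)
    fix x y assume x: "x \<in> gap_coeffs r (t+1)" and y: "y \<in> gap_coeffs r (t+1)"
      and e: "gap_elem p r (\<lambda>_. 0) b x = gap_elem p r (\<lambda>_. 0) b y"
    have "gap_elem p r b0 b x = gap_elem p r b0 b y" using e gap0[of p b0 r b] by metis
    then show "x = y" using inj x y csub by (meson inj_onD subsetD)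
  qed
  have cardG: "card G = (t+1)^r" unfolding G_def using card_image[OF inj0] card_coeffs by simp
  define \<alpha> where "\<alpha> = \<mu> * real n / real p powr (0.9 * \<delta>)"
  have "real p powr (0.9 * \<delta>) = real s powr 0.9" unfolding sdef powr_powr by (simp add: mult.commute)
  then have \<alpha>eq: "\<alpha> = real r / real s powr 0.9" unfolding \<alpha>_def rdef by simp
  have GS: "G \<subseteq> Sym p n \<alpha> X"
  proof
    fix g assume "g \<in> G"
    then obtain a' where a': "a' \<in> gap_coeffs r (t+1)" and g: "g = gap_elem p r (\<lambda>_. 0) b a'"
      unfolding G_def by blast
    have gz: "g \<in> zpn p n" using g gap0_zpn pp bz by simp
    have a'b: "0 \<le> a' j \<and> a' j \<le> int t" if "j \<in> {1..r}" for j
      using PiE_mem[OF a'[unfolded gap_coeffs_def] that] by simp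
    define D where "D = gap_coeffs r (s - t)"
    define h where "h = (\<lambda>a. gap_elem p r b0 b (restrict (\<lambda>j. a j + a' j) {1..r}))"
    have D1: "a \<in> gap_coeffs r s" if "a \<in> D" for a
      using that unfolding D_def gap_coeffs_def by (rule subsetD[OF PiE_mono, rotated]) auto
    have D2: "restrict (\<lambda>j. a j + a' j) {1..r} \<in> gap_coeffs r s" if a: "a \<in> D" for a
      unfolding gap_coeffs_def
    proof (rule PiE_I)
      fix j assume j: "j \<in> {1..r}"
      have "a j \<in> {0..<int (s - t)}" using PiE_mem[OF a[unfolded D_def gap_coeffs_def] j] .
      then have "0 \<le> a j" "a j < int s - int t" using tlts by auto
      then show "restrict (\<lambda>j. a j + a' j) {1..r} j \<in> {0..<int s}" using a'b[OF j] j by simp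
    next
      fix j assume nj: "j \<notin> {1..r}"
      show "restrict (\<lambda>j. a j + a' j) {1..r} j = undefined"
        unfolding restrict_def using nj by (simp only: if_False)
    qed
    have hD: "h ` D \<subseteq> X \<inter> (\<lambda>x. vadd p x g) ` X"
    proof
      fix y assume "y \<in> h ` D"
      then obtain a where a: "a \<in> D" "y = h a" by blast
      have yX: "y \<in> X" using D2[OF a(1)] a(2) unfolding h_def Xd gap_def by blast
      have e1: "vadd p (gap_elem p r b0 b a) g = gap_elem p r b0 b (\<lambda>j. a j + a' j)"
        unfolding g shift by simp
      have e2: "h a = gap_elem p r b0 b (\<lambda>j. a j + a' j)"
        unfolding h_def by (rule gap_cong) simp
      have aX: "gap_elem p r b0 b a \<in> X" using D1[OF a(1)] Xd gap_def by auto
      have "y = vadd p (gap_elem p r b0 b a) g" unfolding e1 a(2) e2 ..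
      then have "y \<in> (\<lambda>x. vadd p x g) ` X" using aX by (rule image_eqI)
      then show "y \<in> X \<inter> (\<lambda>x. vadd p x g) ` X" using yX by blast
    qed
    have injh: "inj_on h D"
    proof (rule inj_onI)
      fix x y assume x: "x \<in> D" and y: "y \<in> D" and e: "h x = h y"
      then have rr: "restrict (\<lambda>j. x j + a' j) {1..r} = restrict (\<lambda>j. y j + a' j) {1..r}"
        using inj D2 unfolding h_def by (meson inj_onD)
      have "x j = y j" if "j \<in> {1..r}" for j
        using fun_cong[OF rr, of j] that by simp
      then show "x = y" using x y unfolding D_def gap_coeffs_def by (meson PiE_ext)
    qed
    have "card (h ` D) = (s - t)^r" using card_image[OF injh] by (simp add: D_def card_coeffs)
    moreover have "finite (X \<inter> (\<lambda>x. vadd p x g) ` X)" using finX by simp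
    ultimately have cI: "(s - t)^r \<le> card (X \<inter> (\<lambda>x. vadd p x g) ` X)" using hD card_mono by metis
    have bern: "(1 - \<alpha>) * real (card X) \<le> real ((s - t)^r)"
    proof -
      have x1: "-1 \<le> - (real t / real s)" using tlts spos by simp
      have B: "1 + real r * (- (real t / real s)) \<le> (1 + - (real t / real s))^r"
        by (rule Bernoulli_inequality[OF x1])
      have sp: "real s powr 0.1 * real s powr 0.9 = real s"
        using spos by (simp add: powr_add[symmetric])
      have s9: "real s powr 0.9 > 0" using spos by simp
      have ts: "real t / real s \<le> 1 / real s powr 0.9"
      proof -
        have "real t / real s \<le> real s powr 0.1 / real s" using tle spos by (simp add: divide_right_mono)
        also have "\<dots> = 1 / real s powr 0.9" using sp s9 spos by (simp add: field_simps)
        finally show ?thesis .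
      qed
      have "real r * (real t / real s) \<le> real r * (1 / real s powr 0.9)"
        by (rule mult_left_mono[OF ts]) simp
      then have ra: "real r * (real t / real s) \<le> \<alpha>" using \<alpha>eq by simp
      then have "1 - \<alpha> \<le> (1 - real t / real s)^r" using B by simp
      then have "(1 - \<alpha>) * real s ^ r \<le> (1 - real t / real s)^r * real s ^ r"
        by (rule mult_right_mono) simp
      also have "\<dots> = ((1 - real t / real s) * real s)^r" by (simp add: power_mult_distrib)
      also have "(1 - real t / real s) * real s = real s - real t" using spos by (simp add: field_simps)
      also have "(real s - real t)^r = real ((s - t)^r)" using tlts by (simp add: of_nat_diff)
      finally show ?thesis unfolding cardX by simp
    qed
    have "real ((s - t)^r) \<le> real (card (X \<inter> (\<lambda>x. vadd p x g) ` X))" using cI by (simp only: of_nat_le_iff)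
    then have "(1 - \<alpha>) * real (card X) \<le> real (card (X \<inter> (\<lambda>x. vadd p x g) ` X))" using bern by linarith
    then show "g \<in> Sym p n \<alpha> X" unfolding Sym_def using gz by blast
  qed
  have finS: "finite (Sym p n \<alpha> X)"
    using zpn_finite by (rule finite_subset[rotated]) (auto simp: Sym_def)
  have cGS: "card G \<le> card (Sym p n \<alpha> X)" using card_mono[OF finS GS] .
  have "real (card X) powr 0.1 = (real s powr 0.1) ^ r"
    unfolding cardX using spos
    by (simp add: powr_realpow[symmetric] powr_powr powr_power mult.commute)
  also have "\<dots> \<le> (real t + 1) ^ r" using tgt by (intro power_mono) auto
  also have "\<dots> = real (card G)" unfolding cardG by (simp add: add.commute)
  finally have symb: "real (card X) powr 0.1 \<le> real (card (Sym p n \<alpha> X))" using cGS by linarith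
  show ?thesis unfolding additive_def \<alpha>_def[symmetric] using sumb ent symb by simp
qed

theorem lemma4p1:
  "\<forall>\<epsilon>::real. \<epsilon> > 0 \<longrightarrow>
    (\<exists>c n0 :: nat. \<forall>p::nat. prime p \<and> p \<ge> n0 \<longrightarrow>
      (\<forall>(n::nat) (\<delta>::real) (\<mu>::real) (r::nat) (s::nat) X.
         \<delta> \<ge> real c / ln (real p) \<and> real s = real p powr \<delta> \<and>
         \<mu> > 0 \<and> real r = \<mu> * real n \<and> r > 0 \<and>
         is_proper_gap p n r s X \<longrightarrow>
         additive p n (\<mu> * real n / real p powr (0.9 * \<delta>)) 0.1 \<epsilon> X \<and>
         entropy_rate p n (\<delta> * \<mu>) X))"
proof (intro allI impI)
  fix \<epsilon> :: real assume \<epsilon>: "\<epsilon> > 0"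
  define c where "c = nat \<lceil>1 / \<epsilon>\<rceil>"
  have "real c \<ge> 1 / \<epsilon>" unfolding c_def by (rule real_nat_ceiling_ge)
  then have c\<epsilon>: "1 \<le> real c * \<epsilon>" using \<epsilon> by (simp add: divide_le_eq)
  show "\<exists>c n0 :: nat. \<forall>p::nat. prime p \<and> p \<ge> n0 \<longrightarrow>
      (\<forall>(n::nat) (\<delta>::real) (\<mu>::real) (r::nat) (s::nat) X.
         \<delta> \<ge> real c / ln (real p) \<and> real s = real p powr \<delta> \<and>
         \<mu> > 0 \<and> real r = \<mu> * real n \<and> r > 0 \<and>
         is_proper_gap p n r s X \<longrightarrow>
         additive p n (\<mu> * real n / real p powr (0.9 * \<delta>)) 0.1 \<epsilon> X \<and>
         entropy_rate p n (\<delta> * \<mu>) X)"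
  proof (intro exI allI impI)
    fix p n r s :: nat and \<delta> \<mu> :: real and X
    assume "prime p \<and> p \<ge> 0"
      and h: "\<delta> \<ge> real c / ln (real p) \<and> real s = real p powr \<delta> \<and>
         \<mu> > 0 \<and> real r = \<mu> * real n \<and> r > 0 \<and> is_proper_gap p n r s X"
    then show "additive p n (\<mu> * real n / real p powr (0.9 * \<delta>)) 0.1 \<epsilon> X \<and>
         entropy_rate p n (\<delta> * \<mu>) X"
      using key[OF _ c\<epsilon> \<epsilon>] by blast
  qed
qed

end
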